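(* Let $p: E \to B$ be a weak homology fibration of simplicial sets and let $f: B' \to B$ be a fibration. Then the pull-back $p': E' = B' \times_B E \to B'$ of $p$ along $f$ is again a weak homology fibration.
   Context: Spaces are simplicial sets. For a map $p: E \to B$ and an $n$-simplex $\sigma: \Delta[n] \to B$, $dp(\sigma)$ denotes the pull-back of $\Delta[n] \xrightarrow{\sigma} B \xleftarrow{p} E$ (the "preimage" of $\sigma$). A map $p: E \to B$ is a weak homology fibration if for every simplex $\sigma$ of $B$ and every simplicial operation $\theta$ (so that $\theta\sigma = \sigma\circ\theta$), the natural map between $dp(\theta\sigma)$ and $dp(\sigma)$ induces an isomorphism in integral homology. Homology means integral homology. *)

theory Defs
  imports Main
begin

definition mono_map :: "nat \<Rightarrow> nat \<Rightarrow> (nat \<Rightarrow> nat) \<Rightarrow> bool" where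
  "mono_map m n \<theta> \<longleftrightarrow> (\<forall>i\<le>m. \<theta> i \<le> n) \<and> (\<forall>i j. i \<le> j \<and> j \<le> m \<longrightarrow> \<theta> i \<le> \<theta> j)"

text \<open>cells X n = set of n-simplices; act X theta m n x = theta^* x for theta : [m] -> [n], x in X_n.\<close>
record 'a sset =
  cells :: "nat \<Rightarrow> 'a set"
  act :: "(nat \<Rightarrow> nat) \<Rightarrow> nat \<Rightarrow> nat \<Rightarrow> 'a \<Rightarrow> 'a"

definition is_sset :: "'a sset \<Rightarrow> bool" where
  "is_sset X \<longleftrightarrow>
     (\<forall>\<theta> m n x. mono_map m n \<theta> \<and> x \<in> cells X n \<longrightarrow> act X \<theta> m n x \<in> cells X m) \<and>
     (\<forall>\<theta> \<theta>' m n x. mono_map m n \<theta> \<and> (\<forall>i\<le>m. \<theta> i = \<theta>' i) \<and> x \<in> cells X n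
        \<longrightarrow> act X \<theta> m n x = act X \<theta>' m n x) \<and>
     (\<forall>n x. x \<in> cells X n \<longrightarrow> act X id n n x = x) \<and>
     (\<forall>\<theta> \<alpha> k m n x. mono_map m n \<theta> \<and> mono_map k m \<alpha> \<and> x \<in> cells X n
        \<longrightarrow> act X \<alpha> k m (act X \<theta> m n x) = act X (\<theta> \<circ> \<alpha>) k n x)"

definition is_smap :: "'a sset \<Rightarrow> 'b sset \<Rightarrow> (nat \<Rightarrow> 'a \<Rightarrow> 'b) \<Rightarrow> bool" where
  "is_smap X Y f \<longleftrightarrow>
     (\<forall>n x. x \<in> cells X n \<longrightarrow> f n x \<in> cells Y n) \<and>
     (\<forall>\<theta> m n x. mono_map m n \<theta> \<and> x \<in> cells X n
        \<longrightarrow> f m (act X \<theta> m n x) = act Y \<theta> m n (f n x))"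

definition coface :: "nat \<Rightarrow> nat \<Rightarrow> nat" where
  "coface i j = (if j < i then j else Suc j)"

definition face :: "'a sset \<Rightarrow> nat \<Rightarrow> nat \<Rightarrow> 'a \<Rightarrow> 'a" where
  "face X n i x = act X (coface i) (n - 1) n x"

text \<open>The standard simplex Delta[n]: k-simplices are monotone maps [k] -> [n] (normalised to 0 outside {0..k}).\<close>
definition std_simplex :: "nat \<Rightarrow> (nat \<Rightarrow> nat) sset" where
  "std_simplex n = \<lparr> cells = (\<lambda>k. {\<alpha>. mono_map k n \<alpha> \<and> (\<forall>i>k. \<alpha> i = 0)}),
                     act = (\<lambda>\<theta> m k \<alpha>. (\<lambda>i. if i \<le> m then \<alpha> (\<theta> i) else 0)) \<rparr>"

definition sset_pullback :: "'x sset \<Rightarrow> 'y sset \<Rightarrow> (nat \<Rightarrow> 'x \<Rightarrow> 'z) \<Rightarrow> (nat \<Rightarrow> 'y \<Rightarrow> 'z)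
    \<Rightarrow> ('x \<times> 'y) sset" where
  "sset_pullback X Y f g = \<lparr> cells = (\<lambda>k. {(x, y). x \<in> cells X k \<and> y \<in> cells Y k \<and> f k x = g k y}),
                            act = (\<lambda>\<theta> m n (x, y). (act X \<theta> m n x, act Y \<theta> m n y)) \<rparr>"

definition char_map :: "'b sset \<Rightarrow> nat \<Rightarrow> 'b \<Rightarrow> nat \<Rightarrow> (nat \<Rightarrow> nat) \<Rightarrow> 'b" where
  "char_map B n \<sigma> = (\<lambda>k \<alpha>. act B \<alpha> k n \<sigma>)"

definition dp :: "'b sset \<Rightarrow> 'e sset \<Rightarrow> (nat \<Rightarrow> 'e \<Rightarrow> 'b) \<Rightarrow> nat \<Rightarrow> 'b \<Rightarrow> ((nat \<Rightarrow> nat) \<times> 'e) sset" where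
  "dp B E p n \<sigma> = sset_pullback (std_simplex n) E (char_map B n \<sigma>) p"

definition kan_fibration :: "'y sset \<Rightarrow> 'x sset \<Rightarrow> (nat \<Rightarrow> 'y \<Rightarrow> 'x) \<Rightarrow> bool" where
  "kan_fibration Y X f \<longleftrightarrow>
     (\<forall>n k (y :: nat \<Rightarrow> 'y) x. 1 \<le> n \<and> k \<le> n \<and>
        (\<forall>i\<le>n. i \<noteq> k \<longrightarrow> y i \<in> cells Y (n - 1)) \<and>
        (\<forall>i j. i < j \<and> j \<le> n \<and> i \<noteq> k \<and> j \<noteq> k
             \<longrightarrow> face Y (n - 1) i (y j) = face Y (n - 1) (j - 1) (y i)) \<and>
        x \<in> cells X n \<and>
        (\<forall>i\<le>n. i \<noteq> k \<longrightarrow> face X n i x = f (n - 1) (y i))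
      \<longrightarrow> (\<exists>z \<in> cells Y n. f n z = x \<and> (\<forall>i\<le>n. i \<noteq> k \<longrightarrow> face Y n i z = y i)))"

definition chains :: "'a sset \<Rightarrow> nat \<Rightarrow> ('a \<Rightarrow> int) set" where
  "chains X n = {c. finite {x. c x \<noteq> 0} \<and> {x. c x \<noteq> 0} \<subseteq> cells X n}"

definition push :: "('a \<Rightarrow> 'b) \<Rightarrow> ('a \<Rightarrow> int) \<Rightarrow> ('b \<Rightarrow> int)" where
  "push g c = (\<lambda>y. \<Sum>x\<in>{x. c x \<noteq> 0 \<and> g x = y}. c x)"

text \<open>Boundary C_(n+1) -> C_n.\<close>
definition bdry :: "'a sset \<Rightarrow> nat \<Rightarrow> ('a \<Rightarrow> int) \<Rightarrow> ('a \<Rightarrow> int)" where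
  "bdry X n c = (\<lambda>y. \<Sum>i\<le>Suc n. (-1) ^ i * push (face X (Suc n) i) c y)"

definition cycles :: "'a sset \<Rightarrow> nat \<Rightarrow> ('a \<Rightarrow> int) set" where
  "cycles X n = {c \<in> chains X n. case n of 0 \<Rightarrow> True | Suc m \<Rightarrow> bdry X m c = (\<lambda>_. 0)}"

definition boundaries :: "'a sset \<Rightarrow> nat \<Rightarrow> ('a \<Rightarrow> int) set" where
  "boundaries X n = bdry X n ` chains X (Suc n)"

definition homologous :: "'a sset \<Rightarrow> nat \<Rightarrow> (('a \<Rightarrow> int) \<times> ('a \<Rightarrow> int)) set" where
  "homologous X n = {(c, c'). c \<in> cycles X n \<and> c' \<in> cycles X n \<and> (\<lambda>x. c x - c' x) \<in> boundaries X n}"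

definition homology :: "'a sset \<Rightarrow> nat \<Rightarrow> ('a \<Rightarrow> int) set set" where
  "homology X n = cycles X n // homologous X n"

definition induced_hom :: "'b sset \<Rightarrow> (nat \<Rightarrow> 'a \<Rightarrow> 'b) \<Rightarrow> nat \<Rightarrow> ('a \<Rightarrow> int) set \<Rightarrow> ('b \<Rightarrow> int) set" where
  "induced_hom Y f n C = homologous Y n `` (push (f n) ` C)"

definition homology_iso :: "'a sset \<Rightarrow> 'b sset \<Rightarrow> (nat \<Rightarrow> 'a \<Rightarrow> 'b) \<Rightarrow> bool" where
  "homology_iso X Y f \<longleftrightarrow> (\<forall>n. bij_betw (induced_hom Y f n) (homology X n) (homology Y n))"

text \<open>The natural map dp(theta sigma) -> dp(sigma), (alpha, e) |-> (theta o alpha, e).\<close>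
definition dp_map :: "(nat \<Rightarrow> nat) \<Rightarrow> nat \<Rightarrow> (nat \<Rightarrow> nat) \<times> 'e \<Rightarrow> (nat \<Rightarrow> nat) \<times> 'e" where
  "dp_map \<theta> k = (\<lambda>(\<alpha>, e). ((\<lambda>i. if i \<le> k then \<theta> (\<alpha> i) else 0), e))"

definition weak_homology_fibration :: "'e sset \<Rightarrow> 'b sset \<Rightarrow> (nat \<Rightarrow> 'e \<Rightarrow> 'b) \<Rightarrow> bool" where
  "weak_homology_fibration E B p \<longleftrightarrow>
     (\<forall>n \<sigma> m \<theta>. \<sigma> \<in> cells B n \<and> mono_map m n \<theta> \<longrightarrow>
        homology_iso (dp B E p m (act B \<theta> m n \<sigma>)) (dp B E p n \<sigma>) (dp_map \<theta>))"

end

theory Submission imports Defs begin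

lemma push_inj_app: "inj h \<Longrightarrow> push h c (h x) = c x"
proof -
  assume "inj h"
  hence "{x'. c x' \<noteq> 0 \<and> h x' = h x} = (if c x \<noteq> 0 then {x} else {})"
    by (auto dest: injD)
  thus ?thesis unfolding push_def by auto
qed

lemma push_notin: "y \<notin> range h \<Longrightarrow> push h c y = 0"
proof -
  assume "y \<notin> range h"
  hence "{x. c x \<noteq> 0 \<and> h x = y} = {}" by auto
  thus ?thesis unfolding push_def by (simp only: sum.empty)
qed

lemma push_inj: "inj h \<Longrightarrow> push h c = (\<lambda>y. if y \<in> range h then c (inv h y) else 0)"
  by (rule ext) (auto simp: push_inj_app push_notin)

lemma push_inj_eq: "inj h \<Longrightarrow> push h c = push h d \<Longrightarrow> c = d"
  by (rule ext) (metis push_inj_app)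

lemma push_comp_inj: assumes "inj h" shows "push a (push h c) = push (a \<circ> h) c"
proof (rule ext)
  fix z
  have S: "{y. push h c y \<noteq> 0 \<and> a y = z} = h ` {x. c x \<noteq> 0 \<and> a (h x) = z}"
  proof (rule set_eqI, rule iffI)
    fix y assume y: "y \<in> {y. push h c y \<noteq> 0 \<and> a y = z}"
    hence "y \<in> range h" using push_notin[of y h c] by auto
    then obtain x where "y = h x" by auto
    thus "y \<in> h ` {x. c x \<noteq> 0 \<and> a (h x) = z}" using y assms by (auto simp: push_inj_app)
  qed (use assms in \<open>auto simp: push_inj_app\<close>)
  have "push a (push h c) z = (\<Sum>y\<in>h ` {x. c x \<noteq> 0 \<and> a (h x) = z}. push h c y)"
    unfolding push_def[of a] S ..
  also have "\<dots> = (\<Sum>x\<in>{x. c x \<noteq> 0 \<and> a (h x) = z}. push h c (h x))"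
    using assms by (subst sum.reindex) (auto intro: inj_on_subset)
  also have "\<dots> = push (a \<circ> h) c z" unfolding push_def[of "a \<circ> h"] using assms
    by (intro sum.cong) (auto simp: push_inj_app)
  finally show "push a (push h c) z = push (a \<circ> h) c z" .
qed

lemma push_inj_comp: assumes "inj h" shows "push h (push a c) = push (h \<circ> a) c"
proof (rule ext)
  fix y
  show "push h (push a c) y = push (h \<circ> a) c y"
  proof (cases "y \<in> range h")
    case True
    then obtain z where z: "y = h z" by auto
    have "{x. c x \<noteq> 0 \<and> (h \<circ> a) x = y} = {x. c x \<noteq> 0 \<and> a x = z}"
      using assms z by (auto dest: injD)
    have "push h (push a c) y = push a c z" using z assms by (simp add: push_inj_app)
    also have "\<dots> = push (h \<circ> a) c y" unfolding push_def using \<open>{x. c x \<noteq> 0 \<and> (h \<circ> a) x = y} = _\<close> by simp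
    finally show ?thesis .
  next
    case False
    hence "{x. c x \<noteq> 0 \<and> (h \<circ> a) x = y} = {}" by auto
    hence "push (h \<circ> a) c y = 0" unfolding push_def by (simp only: sum.empty)
    thus ?thesis using False by (simp add: push_notin)
  qed
qed

lemma push_cong: "(\<And>x. c x \<noteq> 0 \<Longrightarrow> a x = b x) \<Longrightarrow> push a c = push b c"
  unfolding push_def by (rule ext) (rule sum.cong, auto)

definition relab :: "'a sset \<Rightarrow> 'b sset \<Rightarrow> (nat \<Rightarrow> 'a \<Rightarrow> 'b) \<Rightarrow> bool" where
  "relab X X' h \<longleftrightarrow> (\<forall>k. inj (h k)) \<and> (\<forall>k. h k ` cells X k = cells X' k) \<and>
    (\<forall>k i x. x \<in> cells X (Suc k) \<and> i \<le> Suc k \<longrightarrow>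
       face X' (Suc k) i (h (Suc k) x) = h k (face X (Suc k) i x))"

lemma push_support: "inj h \<Longrightarrow> {y. push h c y \<noteq> 0} = h ` {x. c x \<noteq> 0}"
proof (rule set_eqI, rule iffI)
  fix y assume inj: "inj h" and y: "y \<in> {y. push h c y \<noteq> 0}"
  hence "y \<in> range h" using push_notin[of y h c] by auto
  then obtain x where "y = h x" by auto
  thus "y \<in> h ` {x. c x \<noteq> 0}" using y inj by (auto simp: push_inj_app)
qed (auto simp: push_inj_app)

lemma relab_chains_iff:
  assumes "relab X X' h" shows "push (h k) c \<in> chains X' k \<longleftrightarrow> c \<in> chains X k"
proof -
  have inj: "inj (h k)" and ce: "h k ` cells X k = cells X' k" using assms unfolding relab_def by auto
  show ?thesis unfolding chains_def using inj
    by (simp add: push_support finite_image_iff inj_on_subset ce[symmetric] inj_image_subset_iff)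
qed

lemma relab_chains_surj:
  assumes "relab X X' h" shows "chains X' k = push (h k) ` chains X k"
proof -
  have inj: "inj (h k)" and ce: "h k ` cells X k = cells X' k" using assms unfolding relab_def by auto
  show ?thesis
  proof
    show "push (h k) ` chains X k \<subseteq> chains X' k" using relab_chains_iff[OF assms] by auto
  next
    show "chains X' k \<subseteq> push (h k) ` chains X k"
    proof
      fix d assume d: "d \<in> chains X' k"
      have "d = push (h k) (d \<circ> h k)"
      proof (rule ext)
        fix y show "d y = push (h k) (d \<circ> h k) y"
        proof (cases "y \<in> range (h k)")
          case True then show ?thesis using inj by (auto simp: push_inj_app)
        next
          case False
          hence "y \<notin> cells X' k" using ce by auto
          hence "d y = 0" using d unfolding chains_def by auto
          thus ?thesis using False by (simp add: push_notin)
        qed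
      qed
      moreover have "d \<circ> h k \<in> chains X k" using relab_chains_iff[OF assms, of k "d \<circ> h k"] d
        calculation by simp
      ultimately show "d \<in> push (h k) ` chains X k" by blast
    qed
  qed
qed

lemma relab_bdry:
  assumes "relab X X' h" and c: "c \<in> chains X (Suc k)"
  shows "bdry X' k (push (h (Suc k)) c) = push (h k) (bdry X k c)"
proof -
  have inj: "\<And>k. inj (h k)" and fc: "\<And>k i x. x \<in> cells X (Suc k) \<Longrightarrow> i \<le> Suc k \<Longrightarrow>
       face X' (Suc k) i (h (Suc k) x) = h k (face X (Suc k) i x)"
    using assms unfolding relab_def by auto
  have eq: "push (face X' (Suc k) i) (push (h (Suc k)) c) = push (h k) (push (face X (Suc k) i) c)"
    if "i \<le> Suc k" for i
  proof -
    have "push (face X' (Suc k) i) (push (h (Suc k)) c) = push (face X' (Suc k) i \<circ> h (Suc k)) c"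
      by (rule push_comp_inj[OF inj])
    also have "\<dots> = push (h k \<circ> face X (Suc k) i) c"
      by (rule push_cong) (use c that fc in \<open>auto simp: chains_def\<close>)
    also have "\<dots> = push (h k) (push (face X (Suc k) i) c)"
      by (rule push_inj_comp[OF inj, symmetric])
    finally show ?thesis .
  qed
  show ?thesis
  proof (rule ext)
    fix y
    have "bdry X' k (push (h (Suc k)) c) y = (\<Sum>i\<le>Suc k. (-1) ^ i * push (h k) (push (face X (Suc k) i) c) y)"
      unfolding bdry_def by (rule sum.cong) (auto simp: eq)
    also have "\<dots> = push (h k) (bdry X k c) y"
      using inj[of k] unfolding bdry_def by (simp add: push_inj)
    finally show "bdry X' k (push (h (Suc k)) c) y = push (h k) (bdry X k c) y" .
  qed
qed

lemma push_zero: "push h (\<lambda>_. 0) = (\<lambda>_. 0)"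
  unfolding push_def by simp

lemma relab_cycles_iff:
  assumes "relab X X' h" shows "push (h k) c \<in> cycles X' k \<longleftrightarrow> c \<in> cycles X k"
proof (cases k)
  case 0 thus ?thesis using relab_chains_iff[OF assms] by (simp add: cycles_def)
next
  case (Suc m)
  have inj: "inj (h m)" using assms unfolding relab_def by auto
  have z: "push (h m) d = (\<lambda>_. 0) \<longleftrightarrow> d = (\<lambda>_. 0)" for d
    using push_inj_eq[OF inj, of d "\<lambda>_. 0"] by (auto simp: push_zero)
  show ?thesis using relab_chains_iff[OF assms] relab_bdry[OF assms] z Suc
    by (auto simp: cycles_def)
qed

lemma relab_cycles_surj:
  assumes "relab X X' h" shows "cycles X' k = push (h k) ` cycles X k"
proof
  show "push (h k) ` cycles X k \<subseteq> cycles X' k" using relab_cycles_iff[OF assms, of k] by auto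
next
  show "cycles X' k \<subseteq> push (h k) ` cycles X k"
  proof
    fix d assume d: "d \<in> cycles X' k"
    hence "d \<in> chains X' k" by (auto simp: cycles_def)
    then obtain c where c: "d = push (h k) c" using relab_chains_surj[OF assms, of k] by auto
    hence "c \<in> cycles X k" using d relab_cycles_iff[OF assms, of k c] by simp
    thus "d \<in> push (h k) ` cycles X k" using c by auto
  qed
qed

lemma relab_inj_push: assumes "relab X X' h" shows "inj (push (h k))"
proof -
  have "inj (h k)" using assms unfolding relab_def by auto
  thus ?thesis by (intro injI) (rule push_inj_eq)
qed

lemma relab_boundaries:
  assumes "relab X X' h" shows "boundaries X' k = push (h k) ` boundaries X k"
proof -
  have "boundaries X' k = bdry X' k ` push (h (Suc k)) ` chains X (Suc k)"
    unfolding boundaries_def relab_chains_surj[OF assms] ..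
  also have "\<dots> = push (h k) ` bdry X k ` chains X (Suc k)"
    unfolding image_image using relab_bdry[OF assms] by (intro image_cong) auto
  finally show ?thesis unfolding boundaries_def .
qed

lemma relab_homologous:
  assumes "relab X X' h"
  shows "(push (h k) c, push (h k) c') \<in> homologous X' k \<longleftrightarrow> (c, c') \<in> homologous X k"
proof -
  have inj: "inj (h k)" using assms unfolding relab_def by auto
  have d: "(\<lambda>x. push (h k) c x - push (h k) c' x) = push (h k) (\<lambda>x. c x - c' x)"
    using inj by (auto simp: push_inj)
  have b: "push (h k) e \<in> boundaries X' k \<longleftrightarrow> e \<in> boundaries X k" for e
    unfolding relab_boundaries[OF assms] using relab_inj_push[OF assms] by (simp add: inj_image_mem_iff)
  show ?thesis unfolding homologous_def using relab_cycles_iff[OF assms] d b by simp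
qed

lemma relab_Image:
  assumes "relab X X' h"
  shows "push (h k) ` (homologous X k `` S) = homologous X' k `` (push (h k) ` S)"
proof
  show "push (h k) ` (homologous X k `` S) \<subseteq> homologous X' k `` (push (h k) ` S)"
    using relab_homologous[OF assms] by blast
next
  show "homologous X' k `` (push (h k) ` S) \<subseteq> push (h k) ` (homologous X k `` S)"
  proof
    fix d assume "d \<in> homologous X' k `` (push (h k) ` S)"
    then obtain s where s: "s \<in> S" "(push (h k) s, d) \<in> homologous X' k" by auto
    hence "d \<in> cycles X' k" by (auto simp: homologous_def)
    then obtain e where e: "d = push (h k) e" using relab_cycles_surj[OF assms] by auto
    thus "d \<in> push (h k) ` (homologous X k `` S)" using s relab_homologous[OF assms] by blast
  qed
qed

lemma relab_homology:
  assumes "relab X X' h"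
  shows "bij_betw (\<lambda>C. push (h k) ` C) (homology X k) (homology X' k)"
proof -
  have "homology X' k = (\<lambda>C. push (h k) ` C) ` homology X k"
  proof -
    have "homology X' k = (\<Union>x\<in>cycles X k. {homologous X' k `` {push (h k) x}})"
      unfolding homology_def quotient_def relab_cycles_surj[OF assms, of k] by simp
    also have "\<dots> = (\<Union>x\<in>cycles X k. {push (h k) ` (homologous X k `` {x})})"
      using relab_Image[OF assms, of k] by simp
    also have "\<dots> = (\<lambda>C. push (h k) ` C) ` homology X k"
      unfolding homology_def quotient_def by auto
    finally show ?thesis .
  qed
  moreover have "inj_on (\<lambda>C. push (h k) ` C) (homology X k)"
    using relab_inj_push[OF assms] by (auto simp: inj_on_def inj_image_eq_iff)
  ultimately show ?thesis by (simp add: bij_betw_def)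
qed


lemma homology_class_chains: "C \<in> homology X k \<Longrightarrow> C \<subseteq> chains X k"
  unfolding homology_def quotient_def homologous_def cycles_def by auto

lemma homology_iso_transport:
  assumes rX: "relab X X' hX" and rY: "relab Y Y' hY"
    and comm: "\<And>k x. x \<in> cells X k \<Longrightarrow> g' k (hX k x) = hY k (g k x)"
    and iso: "homology_iso X Y g"
  shows "homology_iso X' Y' g'"
  unfolding homology_iso_def
proof
  fix k
  let ?QX = "\<lambda>C. push (hX k) ` C" and ?QY = "\<lambda>C. push (hY k) ` C"
  have bX: "bij_betw ?QX (homology X k) (homology X' k)" by (rule relab_homology[OF rX])
  have bY: "bij_betw ?QY (homology Y k) (homology Y' k)" by (rule relab_homology[OF rY])
  have I: "bij_betw (induced_hom Y g k) (homology X k) (homology Y k)"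
    using iso unfolding homology_iso_def by auto
  have injX: "inj (hX k)" and injY: "inj (hY k)" using rX rY unfolding relab_def by auto
  have eq: "induced_hom Y' g' k (?QX C) = ?QY (induced_hom Y g k C)" if C: "C \<in> homology X k" for C
  proof -
    have "push (g' k) ` push (hX k) ` C = push (hY k) ` push (g k) ` C"
      unfolding image_image
    proof (rule image_cong[OF refl])
      fix c assume "c \<in> C"
      hence c: "c \<in> chains X k" using homology_class_chains[OF C] by auto
      have "push (g' k) (push (hX k) c) = push (g' k \<circ> hX k) c" by (rule push_comp_inj[OF injX])
      also have "\<dots> = push (hY k \<circ> g k) c"
        by (rule push_cong) (use c comm in \<open>auto simp: chains_def\<close>)
      also have "\<dots> = push (hY k) (push (g k) c)" by (rule push_inj_comp[OF injY, symmetric])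
      finally show "push (g' k) (push (hX k) c) = push (hY k) (push (g k) c)" .
    qed
    thus ?thesis unfolding induced_hom_def relab_Image[OF rY] by simp
  qed
  have "bij_betw (?QY \<circ> induced_hom Y g k) (homology X k) (homology Y' k)"
    by (rule bij_betw_trans[OF I bY])
  hence "bij_betw (induced_hom Y' g' k \<circ> ?QX) (homology X k) (homology Y' k)"
    by (subst bij_betw_cong[where g="?QY \<circ> induced_hom Y g k"]) (auto simp: eq)
  thus "bij_betw (induced_hom Y' g' k) (homology X' k) (homology Y' k)"
    using bij_betw_comp_iff[OF bX] by blast
qed


lemma cells_dp: "cells (dp B E p n \<sigma>) k =
   {(\<alpha>, e). mono_map k n \<alpha> \<and> (\<forall>i>k. \<alpha> i = 0) \<and> e \<in> cells E k \<and> act B \<alpha> k n \<sigma> = p k e}"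
  unfolding dp_def sset_pullback_def std_simplex_def char_map_def by auto

lemma act_dp: "act (dp B E p n \<sigma>) \<theta> m k (\<alpha>, e) = ((\<lambda>i. if i \<le> m then \<alpha> (\<theta> i) else 0), act E \<theta> m k e)"
  unfolding dp_def sset_pullback_def std_simplex_def by simp

lemma cells_pb: "cells (sset_pullback X Y f g) k = {(x, y). x \<in> cells X k \<and> y \<in> cells Y k \<and> f k x = g k y}"
  unfolding sset_pullback_def by simp

lemma act_pb: "act (sset_pullback X Y f g) \<theta> m n (x, y) = (act X \<theta> m n x, act Y \<theta> m n y)"
  unfolding sset_pullback_def by simp

lemma mono_map_comp: "mono_map m n \<theta> \<Longrightarrow> mono_map k m \<alpha> \<Longrightarrow> mono_map k n (\<theta> \<circ> \<alpha>)"
  unfolding mono_map_def by auto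

lemma mono_map_coface: "i \<le> Suc k \<Longrightarrow> mono_map k (Suc k) (coface i)"
  unfolding mono_map_def coface_def by auto

lemma act_cell: "is_sset X \<Longrightarrow> mono_map m n \<theta> \<Longrightarrow> x \<in> cells X n \<Longrightarrow> act X \<theta> m n x \<in> cells X m"
  unfolding is_sset_def by blast

lemma act_act:
  assumes X: "is_sset X" and th: "mono_map m n \<theta>" and al: "mono_map k m \<alpha>" and x: "x \<in> cells X n"
  shows "act X \<alpha> k m (act X \<theta> m n x) = act X (\<lambda>i. if i \<le> k then \<theta> (\<alpha> i) else 0) k n x"
proof -
  have "act X \<alpha> k m (act X \<theta> m n x) = act X (\<theta> \<circ> \<alpha>) k n x"
    using X th al x unfolding is_sset_def by blast
  also have "\<dots> = act X (\<lambda>i. if i \<le> k then \<theta> (\<alpha> i) else 0) k n x"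
  proof -
    have "mono_map k n (\<theta> \<circ> \<alpha>)" by (rule mono_map_comp[OF th al])
    moreover have "\<forall>i\<le>k. (\<theta> \<circ> \<alpha>) i = (\<lambda>i. if i \<le> k then \<theta> (\<alpha> i) else 0) i" by simp
    moreover have cg: "\<forall>\<theta> \<theta>' m n x. mono_map m n \<theta> \<and> (\<forall>i\<le>m. \<theta> i = \<theta>' i) \<and> x \<in> cells X n
        \<longrightarrow> act X \<theta> m n x = act X \<theta>' m n x" using X unfolding is_sset_def by blast
    ultimately show ?thesis using x cg[rule_format, of k n "\<theta> \<circ> \<alpha>" "\<lambda>i. if i \<le> k then \<theta> (\<alpha> i) else 0" x] by blast
  qed
  finally show ?thesis .
qed

definition hmap :: "'c sset \<Rightarrow> 'c \<Rightarrow> nat \<Rightarrow> nat \<Rightarrow> (nat \<Rightarrow> nat) \<times> 'e \<Rightarrow> (nat \<Rightarrow> nat) \<times> ('c \<times> 'e)" where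
  "hmap B' \<tau> m k = (\<lambda>(\<alpha>, e). (\<alpha>, (act B' \<alpha> k m \<tau>, e)))"

lemma relab_dp:
  fixes E :: "'e sset" and B :: "'b sset" and B' :: "'c sset"
    and p :: "nat \<Rightarrow> 'e \<Rightarrow> 'b" and f :: "nat \<Rightarrow> 'c \<Rightarrow> 'b"
  assumes E: "is_sset E" and B: "is_sset B" and B': "is_sset B'" and f: "is_smap B' B f"
    and \<tau>: "\<tau> \<in> cells B' m"
  shows "relab (dp B E p m (f m \<tau>)) (dp B' (sset_pullback B' E f p) (\<lambda>n. fst) m \<tau>) (hmap B' \<tau> m)"
  unfolding relab_def
proof (intro conjI allI impI)
  fix k show "inj (hmap B' \<tau> m k)" unfolding hmap_def inj_def by auto
next
  fix k
  show "hmap B' \<tau> m k ` cells (dp B E p m (f m \<tau>)) k = cells (dp B' (sset_pullback B' E f p) (\<lambda>n. fst) m \<tau>) k"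
  proof
    show "hmap B' \<tau> m k ` cells (dp B E p m (f m \<tau>)) k \<subseteq> cells (dp B' (sset_pullback B' E f p) (\<lambda>n. fst) m \<tau>) k"
    proof
      fix y assume "y \<in> hmap B' \<tau> m k ` cells (dp B E p m (f m \<tau>)) k"
      then obtain \<alpha> e where y: "y = (\<alpha>, (act B' \<alpha> k m \<tau>, e))" and a: "mono_map k m \<alpha>" "\<forall>i>k. \<alpha> i = 0"
        "e \<in> cells E k" "act B \<alpha> k m (f m \<tau>) = p k e"
        unfolding cells_dp hmap_def by auto
      have c: "act B' \<alpha> k m \<tau> \<in> cells B' k" by (rule act_cell[OF B' a(1) \<tau>])
      have "f k (act B' \<alpha> k m \<tau>) = act B \<alpha> k m (f m \<tau>)" using f a(1) \<tau> unfolding is_smap_def by blast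
      thus "y \<in> cells (dp B' (sset_pullback B' E f p) (\<lambda>n. fst) m \<tau>) k"
        using y a c unfolding cells_dp cells_pb by auto
    qed
  next
    show "cells (dp B' (sset_pullback B' E f p) (\<lambda>n. fst) m \<tau>) k \<subseteq> hmap B' \<tau> m k ` cells (dp B E p m (f m \<tau>)) k"
    proof
      fix y assume "y \<in> cells (dp B' (sset_pullback B' E f p) (\<lambda>n. fst) m \<tau>) k"
      then obtain \<alpha> b e where y: "y = (\<alpha>, (b, e))" and a: "mono_map k m \<alpha>" "\<forall>i>k. \<alpha> i = 0"
        "e \<in> cells E k" "b \<in> cells B' k" "f k b = p k e" "act B' \<alpha> k m \<tau> = b"
        unfolding cells_dp cells_pb by auto
      have "f k (act B' \<alpha> k m \<tau>) = act B \<alpha> k m (f m \<tau>)" using f a(1) \<tau> unfolding is_smap_def by blast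
      hence "(\<alpha>, e) \<in> cells (dp B E p m (f m \<tau>)) k" using a unfolding cells_dp by auto
      moreover have "y = hmap B' \<tau> m k (\<alpha>, e)" using y a unfolding hmap_def by simp
      ultimately show "y \<in> hmap B' \<tau> m k ` cells (dp B E p m (f m \<tau>)) k" by blast
    qed
  qed
next
  fix k i x assume "x \<in> cells (dp B E p m (f m \<tau>)) (Suc k) \<and> i \<le> Suc k"
  then obtain \<alpha> e where x: "x = (\<alpha>, e)" and a: "mono_map (Suc k) m \<alpha>" and i: "i \<le> Suc k"
    unfolding cells_dp by auto
  have "act B' (coface i) k (Suc k) (act B' \<alpha> (Suc k) m \<tau>) = act B' (\<lambda>j. if j \<le> k then \<alpha> (coface i j) else 0) k m \<tau>"
    by (rule act_act[OF B' a mono_map_coface[OF i] \<tau>])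
  thus "face (dp B' (sset_pullback B' E f p) (\<lambda>n. fst) m \<tau>) (Suc k) i (hmap B' \<tau> m (Suc k) x) =
          hmap B' \<tau> m k (face (dp B E p m (f m \<tau>)) (Suc k) i x)"
    unfolding x face_def hmap_def by (simp add: act_dp act_pb)
qed

theorem proposition1p3:
  fixes E :: "'e sset" and B :: "'b sset" and B' :: "'c sset"
    and p :: "nat \<Rightarrow> 'e \<Rightarrow> 'b" and f :: "nat \<Rightarrow> 'c \<Rightarrow> 'b"
  assumes "is_sset E" and "is_sset B" and "is_sset B'"
    and "is_smap E B p" and "is_smap B' B f"
    and "weak_homology_fibration E B p"
    and "kan_fibration B' B f"
  shows "weak_homology_fibration (sset_pullback B' E f p) B' (\<lambda>n. fst)"
  unfolding weak_homology_fibration_def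
proof (intro allI impI)
  fix n \<sigma> m \<theta> assume "\<sigma> \<in> cells B' n \<and> mono_map m n \<theta>"
  hence \<sigma>: "\<sigma> \<in> cells B' n" and th: "mono_map m n \<theta>" by auto
  define \<tau> where "\<tau> = act B' \<theta> m n \<sigma>"
  have \<tau>: "\<tau> \<in> cells B' m" unfolding \<tau>_def by (rule act_cell[OF assms(3) th \<sigma>])
  have f\<tau>: "f m \<tau> = act B \<theta> m n (f n \<sigma>)" using assms(5) th \<sigma> unfolding \<tau>_def is_smap_def by blast
  have f\<sigma>: "f n \<sigma> \<in> cells B n" using assms(5) \<sigma> unfolding is_smap_def by blast
  have iso: "homology_iso (dp B E p m (f m \<tau>)) (dp B E p n (f n \<sigma>)) (dp_map \<theta>)"
    using assms(6) f\<sigma> th unfolding weak_homology_fibration_def f\<tau> by blast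
  show "homology_iso (dp B' (sset_pullback B' E f p) (\<lambda>n. fst) m (act B' \<theta> m n \<sigma>))
          (dp B' (sset_pullback B' E f p) (\<lambda>n. fst) n \<sigma>) (dp_map \<theta>)"
    unfolding \<tau>_def[symmetric]
  proof (rule homology_iso_transport[OF relab_dp[OF assms(1-3,5) \<tau>] relab_dp[OF assms(1-3,5) \<sigma>] _ iso])
    fix k x assume "x \<in> cells (dp B E p m (f m \<tau>)) k"
    then obtain \<alpha> e where x: "x = (\<alpha>, e)" and a: "mono_map k m \<alpha>" unfolding cells_dp by auto
    have "act B' \<alpha> k m \<tau> = act B' (\<lambda>i. if i \<le> k then \<theta> (\<alpha> i) else 0) k n \<sigma>"
      unfolding \<tau>_def by (rule act_act[OF assms(3) th a \<sigma>])
    thus "dp_map \<theta> k (hmap B' \<tau> m k x) = hmap B' \<sigma> n k (dp_map \<theta> k x)"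
      unfolding x hmap_def dp_map_def by simp
  qed
qed

end
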